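(* Let $p$ be a propositional variable. The infinite set $\Sigma=\{\blacksquare^n p: n\in\mathbb{N}\}\cup\{\neg\mathsf{H}p\}$ is not satisfiable in any $\mathsf{TLAE}$-model (there is no $\mathsf{TLAE}$-model $\mathfrak{M}$ and moment $w$ with $\mathfrak{M},w\models\psi$ for all $\psi\in\Sigma$), whereas every finite subset of $\Sigma$ is satisfiable at some moment of some $\mathsf{TLAE}$-model. Consequently $\mathsf{TLAE}$ is not compact with respect to $\mathsf{TLAE}$-models.
   Context: Here $\blacksquare^n$ denotes $n$-fold iteration of $\blacksquare$ ($\blacksquare^0 p=p$). Language: fix finite sets $\mathtt{Action}=\{\delta_1,\dots,\delta_n\}$, $\mathtt{Agent}=\{\alpha_1,\dots,\alpha_m\}$; action types $\mathtt{Action}^*$ generated by $\Delta::=\delta_j\mid\Delta\cup\Delta\mid\overline{\Delta}$; propositional constants $\mathfrak{d}^{\alpha_i}_j$, $\mathfrak{e}^{\alpha_i}$; variables $\mathtt{Var}$. Formulas: $\phi::=p\mid\mathfrak{e}^{\alpha_i}\mid\mathfrak{d}^{\alpha_i}_j\mid\neg\phi\mid\phi\to\phi\mid\Box\phi\mid[\mathsf{A}]\phi\mid\blacksquare\phi\mid\mathsf{H}\phi$. Translation: $t(\delta_j^{\alpha_i})=\mathfrak{d}^{\alpha_i}_j$, $t(\overline{\Delta}^{\alpha_i})=\neg t(\Delta^{\alpha_i})$, $t(\Delta^{\alpha_i}\cup\Gamma^{\alpha_k})=t(\Delta^{\alpha_i})\vee t(\Gamma^{\alpha_k})$. Semantics: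 an $\mathcal{L}$-frame is $\langle W,\{W_{\mathfrak{d}^{\alpha_i}_j}\},\{W_{\mathfrak{e}^{\alpha_i}}\},R_\Box,R_{\mathsf{A}},R_\blacksquare,R_{\mathsf{H}}\rangle$ with subsets $W_c\subseteq W$ and binary relations on $W$; a model adds $V:\mathtt{Var}\to\mathcal{P}(W)$; constants $c$ are true exactly on $W_c$; $\Box,[\mathsf{A}],\blacksquare,\mathsf{H}$ are interpreted by universal quantification over $R_\Box,R_{\mathsf{A}},R_\blacksquare,R_{\mathsf{H}}$-successors, Booleans as usual. $W_{t(\delta_j^{\alpha_i})}=W_{\mathfrak{d}^{\alpha_i}_j}$, $W_{t(\overline{\Delta}^{\alpha_i})}=W\setminus W_{t(\Delta^{\alpha_i})}$, $W_{t(\Delta^{\alpha_i}\cup\Gamma^{\alpha_k})}=W_{t(\Delta^{\alpha_i})}\cup W_{t(\Gamma^{\alpha_k})}$. A $\mathsf{TLAE}$-frame satisfies: (pA3) $R_{\mathsf{A}}wu\wedge R_{\mathsf{A}}wv\Rightarrow u=v$; (pA4) $R_{\mathsf{A}}\subseteq R_\Box$; (pA5) for every $w$, pairwise distinct agents $\alpha_1,\dots,\alpha_k$ and $\Delta_1,\dots,\Delta_k\in\mathtt{Action}^*$, if each $W_{t(\Delta_i^{\alpha_i})}$ contains an $R_\Box$-successor of $w$, then $\bigcap_iW_{t(\Delta_i^{\alpha_i})}$ contains one; (pA6) if some $R_\Box$-successor of $w$ is in $W_{\mathfrak{e}^{\alpha_i}}$ then some $R_\Box$-successor of $w$ is not;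 (pA10;A11) $R_\Box wv$ iff $R_\blacksquare vw$; (pA12) $R_\blacksquare wu\wedge R_\blacksquare wv\Rightarrow u=v$; (pA9;A14) $R_{\mathsf{H}}$ is the transitive closure of $R_\blacksquare$; (pA13) for every $w$, either $w$ has no $R_{\mathsf{H}}$-successor or there is $u$ with $R_{\mathsf{H}}wu$ having no $R_{\mathsf{H}}$-successor. A $\mathsf{TLAE}$-model is a model over a $\mathsf{TLAE}$-frame. *)

theory Defs
  imports Main
begin

datatype 'ac act = Basic 'ac | AUnion "'ac act" "'ac act" | ACompl "'ac act"

datatype ('ag, 'ac, 'v) fm =
    Var 'v
  | ExConst 'ag
  | DoConst 'ag 'ac
  | Neg "('ag, 'ac, 'v) fm"
  | Imp "('ag, 'ac, 'v) fm" "('ag, 'ac, 'v) fm"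
  | Box "('ag, 'ac, 'v) fm"
  | Astit "('ag, 'ac, 'v) fm"
  | BBox "('ag, 'ac, 'v) fm"
  | Hist "('ag, 'ac, 'v) fm"

text \<open>L-frames: the set of worlds is the whole type 'w.\<close>
record ('w, 'ag, 'ac) frame =
  Wd :: "'ag \<Rightarrow> 'ac \<Rightarrow> 'w set"
  We :: "'ag \<Rightarrow> 'w set"
  RBox :: "'w \<Rightarrow> 'w \<Rightarrow> bool"
  RA :: "'w \<Rightarrow> 'w \<Rightarrow> bool"
  RBB :: "'w \<Rightarrow> 'w \<Rightarrow> bool"
  RH :: "'w \<Rightarrow> 'w \<Rightarrow> bool"

fun sat :: "('w, 'ag, 'ac) frame \<Rightarrow> ('v \<Rightarrow> 'w set) \<Rightarrow> 'w \<Rightarrow> ('ag, 'ac, 'v) fm \<Rightarrow> bool" where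
  "sat F V w (Var p) = (w \<in> V p)"
| "sat F V w (ExConst a) = (w \<in> We F a)"
| "sat F V w (DoConst a j) = (w \<in> Wd F a j)"
| "sat F V w (Neg \<phi>) = (\<not> sat F V w \<phi>)"
| "sat F V w (Imp \<phi> \<psi>) = (sat F V w \<phi> \<longrightarrow> sat F V w \<psi>)"
| "sat F V w (Box \<phi>) = (\<forall>v. RBox F w v \<longrightarrow> sat F V v \<phi>)"
| "sat F V w (Astit \<phi>) = (\<forall>v. RA F w v \<longrightarrow> sat F V v \<phi>)"
| "sat F V w (BBox \<phi>) = (\<forall>v. RBB F w v \<longrightarrow> sat F V v \<phi>)"
| "sat F V w (Hist \<phi>) = (\<forall>v. RH F w v \<longrightarrow> sat F V v \<phi>)"

fun Wt :: "('w, 'ag, 'ac) frame \<Rightarrow> 'ac act \<Rightarrow> 'ag \<Rightarrow> 'w set" where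
  "Wt F (Basic j) a = Wd F a j"
| "Wt F (ACompl d) a = UNIV - Wt F d a"
| "Wt F (AUnion d e) a = Wt F d a \<union> Wt F e a"

definition TLAE_frame :: "('w, 'ag, 'ac) frame \<Rightarrow> bool" where
  "TLAE_frame F \<longleftrightarrow>
     (\<forall>w u v. RA F w u \<and> RA F w v \<longrightarrow> u = v)                                    \<comment> \<open>pA3\<close>
   \<and> (\<forall>w v. RA F w v \<longrightarrow> RBox F w v)                                              \<comment> \<open>pA4\<close>
   \<and> (\<forall>w (S :: 'ag set) (D :: 'ag \<Rightarrow> 'ac act). S \<noteq> {} \<longrightarrow>
        (\<forall>a\<in>S. \<exists>v. RBox F w v \<and> v \<in> Wt F (D a) a) \<longrightarrow>
        (\<exists>v. RBox F w v \<and> (\<forall>a\<in>S. v \<in> Wt F (D a) a)))                              \<comment> \<open>pA5\<close>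
   \<and> (\<forall>w a. (\<exists>v. RBox F w v \<and> v \<in> We F a) \<longrightarrow> (\<exists>v. RBox F w v \<and> v \<notin> We F a)) \<comment> \<open>pA6\<close>
   \<and> (\<forall>w v. RBox F w v \<longleftrightarrow> RBB F v w)                                            \<comment> \<open>pA10;A11\<close>
   \<and> (\<forall>w u v. RBB F w u \<and> RBB F w v \<longrightarrow> u = v)                                  \<comment> \<open>pA12\<close>
   \<and> RH F = (RBB F)\<^sup>+\<^sup>+                                                          \<comment> \<open>pA9;A14\<close>
   \<and> (\<forall>w. (\<not> (\<exists>u. RH F w u)) \<or> (\<exists>u. RH F w u \<and> \<not> (\<exists>v. RH F u v)))"

definition Sigma_set :: "'v \<Rightarrow> ('ag, 'ac, 'v) fm set" where
  "Sigma_set p = range (\<lambda>n. (BBox ^^ n) (Var p)) \<union> {Neg (Hist (Var p))}"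

end

theory Submission
  imports Defs
begin

lemma sat_BBox_pow:
  "sat F V w ((BBox ^^ n) \<phi>) = (\<forall>v. (RBB F ^^ n) w v \<longrightarrow> sat F V v \<phi>)"
proof (induction n arbitrary: w)
  case 0
  then show ?case by auto
next
  case (Suc n)
  have "sat F V w ((BBox ^^ Suc n) \<phi>) = (\<forall>u. RBB F w u \<longrightarrow> sat F V u ((BBox ^^ n) \<phi>))"
    by simp
  also have "\<dots> = (\<forall>v. (RBB F OO (RBB F ^^ n)) w v \<longrightarrow> sat F V v \<phi>)"
    using Suc by blast
  also have "\<dots> = (\<forall>v. (RBB F ^^ Suc n) w v \<longrightarrow> sat F V v \<phi>)"
    by (simp only: relpowp_Suc_left)
  finally show ?case .
qed

lemma size_BBox_pow: "size ((BBox ^^ n) x) = n + size x"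
  by (induction n) auto

lemma inj_BBox_pow: "inj (\<lambda>n. (BBox ^^ n) (Var p))"
proof (rule injI)
  fix m n assume "(BBox ^^ m) (Var p) = (BBox ^^ n) (Var p)"
  from arg_cong[where f=size, OF this] show "m = n" by (simp add: size_BBox_pow)
qed

definition chainF :: "nat \<Rightarrow> (nat, 'ag, 'ac) frame" where
  "chainF N = \<lparr> Wd = (\<lambda>_ _. {}), We = (\<lambda>_. {}),
      RBox = (\<lambda>w v. w = Suc v \<and> v \<le> N), RA = (\<lambda>_ _. False),
      RBB = (\<lambda>w v. v = Suc w \<and> w \<le> N),
      RH = (\<lambda>w v. v = Suc w \<and> w \<le> N)\<^sup>+\<^sup>+ \<rparr>"

lemma chain_pow_D: "((\<lambda>w v. v = Suc w \<and> w \<le> (N::nat)) ^^ n) w v \<Longrightarrow> v = w + n \<and> (n > 0 \<longrightarrow> v \<le> Suc N)"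
proof (induction n arbitrary: v)
  case 0
  then show ?case by simp
next
  case (Suc n)
  then obtain y where "((\<lambda>w v. v = Suc w \<and> w \<le> N) ^^ n) w y" "v = Suc y" "y \<le> N"
    by (auto elim: relpowp_Suc_E)
  with Suc.IH show ?case by auto
qed

lemma chain_pow_I: "w + n \<le> Suc N \<Longrightarrow> ((\<lambda>w v. v = Suc w \<and> w \<le> (N::nat)) ^^ n) w (w + n)"
proof (induction n)
  case 0
  then show ?case by simp
next
  case (Suc n)
  then have "((\<lambda>w v. v = Suc w \<and> w \<le> N) ^^ n) w (w + n)" by simp
  moreover have "w + n \<le> N" using Suc.prems by simp
  ultimately show ?case using relpowp_Suc_I by fastforce
qed

lemma chain_tr_D: "(\<lambda>w v. v = Suc w \<and> w \<le> (N::nat))\<^sup>+\<^sup>+ w v \<Longrightarrow> w < v \<and> v \<le> Suc N"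
  using chain_pow_D by (fastforce simp: tranclp_power)

lemma chain_tr_I: "w \<le> N \<Longrightarrow> (\<lambda>w v. v = Suc w \<and> w \<le> (N::nat))\<^sup>+\<^sup>+ w (Suc N)"
proof -
  assume a: "w \<le> N"
  have "((\<lambda>w v. v = Suc w \<and> w \<le> (N::nat)) ^^ (Suc N - w)) w (w + (Suc N - w))"
    using a by (intro chain_pow_I) simp
  moreover have "w + (Suc N - w) = Suc N" using a by simp
  ultimately show ?thesis unfolding tranclp_power
    by (metis zero_less_diff le_imp_less_Suc a)
qed

lemma chain_TLAE: "TLAE_frame (chainF N)"
  unfolding TLAE_frame_def chainF_def
  apply (simp)
  apply (intro conjI allI impI)
  subgoal for w S D
  proof -
    assume ne: "S \<noteq> {}" and h: "\<forall>a\<in>S. \<exists>v. w = Suc v \<and> v \<le> N \<and> v \<in> Wt \<lparr>Wd = \<lambda>_ _. {}, We = \<lambda>_. {},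
                             RBox = \<lambda>w v. w = Suc v \<and> v \<le> N,
                             RA = \<lambda>_ _. False, RBB = \<lambda>w v. v = Suc w \<and> w \<le> N,
                             RH = (\<lambda>w v. v = Suc w \<and> w \<le> N)\<^sup>+\<^sup>+\<rparr> (D a) a"
    obtain a where "a \<in> S" using ne by blast
    then obtain v where v: "w = Suc v" "v \<le> N" using h by blast
    show ?thesis
      apply (rule exI[of _ v])
      using h v by auto
  qed
  subgoal for w
  proof (cases "w \<le> N")
    case True
    have "(\<lambda>w v. v = Suc w \<and> w \<le> N)\<^sup>+\<^sup>+ w (Suc N)" using True by (rule chain_tr_I)
    moreover have "\<forall>x. \<not> (\<lambda>w v. v = Suc w \<and> w \<le> N)\<^sup>+\<^sup>+ (Suc N) x"
      using chain_tr_D[where N=N and w="Suc N"] by fastforce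
    ultimately show ?thesis by blast
  next
    case False
    have "\<forall>x. \<not> (\<lambda>w v. v = Suc w \<and> w \<le> N)\<^sup>+\<^sup>+ w x"
      using chain_tr_D[where N=N and w=w] False by fastforce
    then show ?thesis by blast
  qed
  done

theorem mainTheorem5:
  fixes p :: 'v
  shows "(\<not> (\<exists>(F :: ('w, 'ag :: finite, 'ac :: finite) frame) V w.
              TLAE_frame F \<and> (\<forall>\<psi>\<in>Sigma_set p. sat F V w \<psi>)))
       \<and> (\<forall>\<Gamma>. finite \<Gamma> \<and> \<Gamma> \<subseteq> Sigma_set p \<longrightarrow>
              (\<exists>(F :: (nat, 'ag, 'ac) frame) V w.
                 TLAE_frame F \<and> (\<forall>\<psi>\<in>\<Gamma>. sat F V w \<psi>)))"
proof
  show "\<not> (\<exists>(F :: ('w, 'ag :: finite, 'ac :: finite) frame) V w.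
              TLAE_frame F \<and> (\<forall>\<psi>\<in>Sigma_set p. sat F V w \<psi>))"
  proof
    assume "\<exists>(F :: ('w, 'ag :: finite, 'ac :: finite) frame) V w.
              TLAE_frame F \<and> (\<forall>\<psi>\<in>Sigma_set p. sat F V w \<psi>)"
    then obtain F :: "('w, 'ag, 'ac) frame" and V w where
      T: "TLAE_frame F" and S: "\<forall>\<psi>\<in>Sigma_set p. sat F V w \<psi>" by blast
    have RH: "RH F = (RBB F)\<^sup>+\<^sup>+" using T unfolding TLAE_frame_def by blast
    have "sat F V w (Neg (Hist (Var p)))" using S unfolding Sigma_set_def by blast
    then obtain v where "RH F w v" "v \<notin> V p" by auto
    then obtain n where "(RBB F ^^ n) w v" using RH tranclp_power by metis
    moreover have "sat F V w ((BBox ^^ n) (Var p))" using S unfolding Sigma_set_def by blast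
    ultimately have "v \<in> V p" by (metis sat_BBox_pow sat.simps(1))
    with \<open>v \<notin> V p\<close> show False by simp
  qed
next
  show "\<forall>\<Gamma>. finite \<Gamma> \<and> \<Gamma> \<subseteq> Sigma_set p \<longrightarrow>
              (\<exists>(F :: (nat, 'ag, 'ac) frame) V w.
                 TLAE_frame F \<and> (\<forall>\<psi>\<in>\<Gamma>. sat F V w \<psi>))"
  proof (intro allI impI)
    fix \<Gamma> :: "('ag, 'ac, 'v) fm set"
    assume a: "finite \<Gamma> \<and> \<Gamma> \<subseteq> Sigma_set p"
    let ?A = "(\<lambda>n. (BBox ^^ n) (Var p)) -` \<Gamma>"
    have "finite ?A" using a inj_BBox_pow by (intro finite_vimageI) auto
    then obtain N where N: "\<forall>n\<in>?A. n \<le> N" using finite_nat_set_iff_bounded_le by blast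
    let ?F = "chainF N :: (nat, 'ag, 'ac) frame"
    let ?V = "\<lambda>_. {..N}"
    have "\<forall>\<psi>\<in>\<Gamma>. sat ?F ?V 0 \<psi>"
    proof
      fix \<psi> assume psi: "\<psi> \<in> \<Gamma>"
      then have "\<psi> \<in> Sigma_set p" using a by blast
      then consider n where "\<psi> = (BBox ^^ n) (Var p)" | "\<psi> = Neg (Hist (Var p))"
        unfolding Sigma_set_def by blast
      then show "sat ?F ?V 0 \<psi>"
      proof cases
        case (1 n)
        then have "n \<le> N" using N psi by auto
        then show ?thesis using 1 chain_pow_D[where N=N and n=n and w=0]
          by (auto simp: sat_BBox_pow chainF_def)
      next
        case 2
        then show ?thesis using chain_tr_I[of 0 N] by (auto simp: chainF_def)
      qed
    qed
    then show "\<exists>(F :: (nat, 'ag, 'ac) frame) V w. TLAE_frame F \<and> (\<forall>\<psi>\<in>\<Gamma>. sat F V w \<psi>)"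
      using chain_TLAE by blast
  qed
qed

end
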